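(* Let $\sigma:\mathcal C^*\to\mathcal B^*$ and $\varphi:\mathcal B^*\to\mathcal A^*$ be morphisms of class $P_{ret}$ (with $\mathcal A,\mathcal B,\mathcal C$ finite alphabets). Then the composition $\varphi\sigma:\mathcal C^*\to\mathcal A^*$ is of class $P_{ret}$.
   Context: For a finite word $w$, $\overline{w}$ denotes its reversal; $w$ is a palindrome if $w=\overline w$. A morphism $\varphi:\mathcal B^*\to\mathcal A^*$ is of class $P_{ret}$ if there exists a palindrome $p\in\mathcal A^*$ such that: (a) $\varphi(b)p$ is a palindrome for every $b\in\mathcal B$; (b) for every $b\in\mathcal B$, $\varphi(b)p$ contains exactly two occurrences of $p$, one as a prefix and one as a suffix; (c) $\varphi(b)\ne\varphi(c)$ for all distinct $b,c\in\mathcal B$. *)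

theory Defs
  imports Main "HOL-Library.Sublist"
begin

text \<open>A morphism between free monoids is determined by the images of letters;
  a letter map f :: 'b => 'a list is extended to words by concatenation.\<close>

definition morph :: "('b \<Rightarrow> 'a list) \<Rightarrow> 'b list \<Rightarrow> 'a list" where
  "morph f w = concat (map f w)"

definition palindrome :: "'a list \<Rightarrow> bool" where
  "palindrome w \<longleftrightarrow> rev w = w"

definition occurrences :: "'a list \<Rightarrow> 'a list \<Rightarrow> nat set" where
  "occurrences p w = {i. i + length p \<le> length w \<and> take (length p) (drop i w) = p}"

definition P_ret :: "('b \<Rightarrow> 'a list) \<Rightarrow> bool" where
  "P_ret f \<longleftrightarrow> (\<exists>p. palindrome p \<and>
     (\<forall>b. palindrome (f b @ p)) \<and>
     (\<forall>b. card (occurrences p (f b @ p)) = 2 \<and>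
          prefix p (f b @ p) \<and> suffix p (f b @ p)) \<and>
     (\<forall>b c. b \<noteq> c \<longrightarrow> f b \<noteq> f c))"

end

theory Submission
  imports Defs
begin

lemma morph_simps[simp]:
  "morph f [] = []" "morph f (b#w) = f b @ morph f w" "morph f (u@v) = morph f u @ morph f v"
  by (auto simp: morph_def)

lemma occ_iff: "i \<in> occurrences p w \<longleftrightarrow> i + length p \<le> length w \<and> take (length p) (drop i w) = p"
  by (simp add: occurrences_def)

lemma occ_prefix:
  assumes "prefix w' w" "i + length p \<le> length w'"
  shows "i \<in> occurrences p w \<longleftrightarrow> i \<in> occurrences p w'"
proof -
  obtain r where w: "w = w' @ r" using assms(1) by (auto simp: prefix_def)
  show ?thesis using assms(2) unfolding occ_iff w by auto
qed

context
  fixes f :: "'b \<Rightarrow> 'a list" and p :: "'a list"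
  assumes pal: "palindrome p"
    and palb: "\<forall>b. palindrome (f b @ p)"
    and occb: "\<forall>b. card (occurrences p (f b @ p)) = 2 \<and> prefix p (f b @ p) \<and> suffix p (f b @ p)"
    and injb: "\<forall>b c. b \<noteq> c \<longrightarrow> f b \<noteq> f c"
begin

lemma F1: "f b @ p = p @ rev (f b)"
proof -
  have "rev (f b @ p) = f b @ p" using palb by (simp add: palindrome_def)
  moreover have "rev p = p" using pal by (simp add: palindrome_def)
  ultimately show ?thesis by simp
qed

lemma F2: "f b \<noteq> []"
proof
  assume "f b = []"
  then have "occurrences p (f b @ p) = {0}" by (auto simp: occ_iff)
  moreover have "card (occurrences p (f b @ p)) = 2" using occb by blast
  ultimately show False by simp
qed

lemma F3: "occurrences p (f b @ p) = {0, length (f b)}"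
proof -
  have "0 \<in> occurrences p (f b @ p)" using F1[of b] by (simp add: occ_iff)
  moreover have "length (f b) \<in> occurrences p (f b @ p)" by (simp add: occ_iff)
  moreover have "card (occurrences p (f b @ p)) = 2" using occb by auto
  moreover have "finite (occurrences p (f b @ p))"
    using \<open>card _ = 2\<close> card.infinite by fastforce
  moreover have "length (f b) \<noteq> 0" using F2 by auto
  ultimately show ?thesis
    using card_subset_eq[of "occurrences p (f b @ p)" "{0, length (f b)}"] by simp
qed

lemma F4: "\<exists>r. morph f w @ p = p @ r"
proof (induction w)
  case Nil then show ?case by simp
next
  case (Cons b w)
  then obtain r where "morph f w @ p = p @ r" by auto
  then have "morph f (b#w) @ p = p @ (rev (f b) @ r)" using F1[of b]
    by (metis append.assoc morph_simps(2))
  then show ?case by blast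
qed

lemma K: "prefix (f b @ p) (f b @ morph f w @ p)"
  using F4[of w] by (auto simp: prefix_def)

lemma Kocc: "length (f b) \<in> occurrences p (f b @ morph f w @ p)"
proof -
  have "length (f b) \<in> occurrences p (f b @ p)" using F3 by auto
  then show ?thesis using occ_prefix[OF K[of b w], of "length (f b)" p] by simp
qed

lemma L: "prefix (morph f q @ p) (morph f v @ p) \<Longrightarrow> prefix q v"
proof (induction q arbitrary: v)
  case Nil then show ?case by simp
next
  case (Cons b q')
  show ?case
  proof (cases v)
    case Nil
    then have "length (f b @ morph f q' @ p) \<le> length p"
      using Cons.prems prefix_length_le by fastforce
    then show ?thesis using F2[of b] by simp
  next
    case (Cons b' v')
    define A where "A = f b @ morph f q' @ p"
    define Bw where "Bw = f b' @ morph f v' @ p"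
    have AB: "prefix A Bw" using Cons.prems \<open>v = _\<close> by (simp add: A_def Bw_def)
    have lA: "length A \<le> length Bw" using AB prefix_length_le by blast
    have eqlen: "length (f b) = length (f b')"
    proof (rule ccontr)
      assume "length (f b) \<noteq> length (f b')"
      then consider "length (f b) < length (f b')" | "length (f b') < length (f b)" by linarith
      then show False
      proof cases
        case 1
        have "length (f b) \<in> occurrences p A" using Kocc A_def by simp
        then have "length (f b) \<in> occurrences p Bw"
          using occ_prefix[OF AB] by (simp add: occ_iff)
        then have "length (f b) \<in> occurrences p (f b' @ p)"
          using occ_prefix[OF K[of b' v'], of "length (f b)" p] 1 Bw_def by simp
        then show False using F3 1 F2[of b] by auto
      next
        case 2
        have "length (f b') \<in> occurrences p Bw" using Kocc Bw_def by simp
        then have "length (f b') \<in> occurrences p A"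
          using occ_prefix[OF AB, of "length (f b')" p] 2 A_def by simp
        then have "length (f b') \<in> occurrences p (f b @ p)"
          using occ_prefix[OF K[of b q'], of "length (f b')" p] 2 A_def by simp
        then show False using F3 2 F2[of b'] by auto
      qed
    qed
    have "take (length (f b)) Bw = f b"
    proof -
      obtain r where "Bw = A @ r" using AB by (auto simp: prefix_def)
      then show ?thesis by (simp add: A_def)
    qed
    moreover have "take (length (f b)) Bw = f b'" using eqlen Bw_def by simp
    ultimately have "f b = f b'" by simp
    then have bb: "b = b'" using injb by blast
    then have "prefix (morph f q' @ p) (morph f v' @ p)" using AB A_def Bw_def by simp
    then have "prefix q' v'" using Cons.IH by blast
    then show ?thesis using bb \<open>v = _\<close> by simp
  qed
qed

lemma B: "i \<in> occurrences p (morph f w @ p) \<Longrightarrow> \<exists>u v. w = u @ v \<and> i = length (morph f u)"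
proof (induction w arbitrary: i)
  case Nil then have "i = 0" by (simp add: occ_iff)
  then show ?case by (intro exI[of _ "[]::'b list"] exI[of _ "[]::'b list"]) simp
next
  case (Cons b w)
  show ?case
  proof (cases "i < length (f b)")
    case True
    then have "i \<in> occurrences p (f b @ p)"
      using occ_prefix[OF K[of b w], of i p] Cons.prems by simp
    then have "i = 0" using F3 True by auto
    then show ?thesis by (intro exI[of _ "[]::'b list"] exI[of _ "b#w"]) simp
  next
    case False
    then have "i - length (f b) \<in> occurrences p (morph f w @ p)"
      using Cons.prems by (auto simp: occ_iff)
    then obtain u v where "w = u @ v" "i - length (f b) = length (morph f u)"
      using Cons.IH by blast
    then show ?thesis using False by (intro exI[of _ "b#u"] exI[of _ v]) auto
  qed
qed

lemma palmorph: "palindrome w \<Longrightarrow> palindrome (morph f w @ p)"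
proof -
  define R where "R = (\<lambda>w. concat (map (rev \<circ> f) w))"
  have eq: "morph f w @ p = p @ R w" for w
  proof (induction w)
    case Nil then show ?case by (simp add: R_def)
  next
    case (Cons b w)
    have "morph f (b#w) @ p = f b @ (morph f w @ p)" by simp
    also have "\<dots> = (f b @ p) @ R w" using Cons by simp
    also have "\<dots> = p @ R (b#w)" using F1[of b] by (simp add: R_def)
    finally show ?case .
  qed
  assume "palindrome w"
  then have rw: "rev w = w" by (simp add: palindrome_def)
  have rp: "rev p = p" using pal by (simp add: palindrome_def)
  have "rev (morph f w @ p) = p @ rev (concat (map f w))" using rp by (simp add: morph_def)
  also have "\<dots> = p @ R (rev w)" by (simp add: R_def rev_concat rev_map comp_def)
  also have "\<dots> = morph f w @ p" using rw eq by simp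
  finally show ?thesis by (simp add: palindrome_def)
qed

end

theorem proposition5p3:
  fixes \<sigma> :: "'c::finite \<Rightarrow> 'b::finite list"
    and \<phi> :: "'b \<Rightarrow> 'a::finite list"
  assumes "P_ret \<sigma>" and "P_ret \<phi>"
  shows "P_ret (\<lambda>c. morph \<phi> (\<sigma> c))"
proof -
  obtain q where q: "palindrome q" "\<forall>b. palindrome (\<sigma> b @ q)"
    "\<forall>b. card (occurrences q (\<sigma> b @ q)) = 2 \<and> prefix q (\<sigma> b @ q) \<and> suffix q (\<sigma> b @ q)"
    "\<forall>b c. b \<noteq> c \<longrightarrow> \<sigma> b \<noteq> \<sigma> c"
    using assms(1) unfolding P_ret_def by blast
  obtain p where p: "palindrome p" "\<forall>b. palindrome (\<phi> b @ p)"
    "\<forall>b. card (occurrences p (\<phi> b @ p)) = 2 \<and> prefix p (\<phi> b @ p) \<and> suffix p (\<phi> b @ p)"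
    "\<forall>b c. b \<noteq> c \<longrightarrow> \<phi> b \<noteq> \<phi> c"
    using assms(2) unfolding P_ret_def by blast
  note Lp = L[OF p] and Bp = B[OF p] and F4p = F4[OF p] and F2p = F2[OF p]
    and palp = palmorph[OF p] and F3q = F3[OF q] and F2q = F2[OF q]
  define P where "P = morph \<phi> q @ p"
  have PX: "morph \<phi> (\<sigma> c) @ P = morph \<phi> (\<sigma> c @ q) @ p" for c by (simp add: P_def)
  have nonempty: "morph \<phi> (\<sigma> c) \<noteq> []" for c
  proof -
    obtain b w where "\<sigma> c = b # w" using F2q[of c] by (cases "\<sigma> c") auto
    then show ?thesis using F2p[of b] by simp
  qed
  have occ: "occurrences P (morph \<phi> (\<sigma> c) @ P) = {0, length (morph \<phi> (\<sigma> c))}" for c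
  proof
    show "occurrences P (morph \<phi> (\<sigma> c) @ P) \<subseteq> {0, length (morph \<phi> (\<sigma> c))}"
    proof
      fix i assume i: "i \<in> occurrences P (morph \<phi> (\<sigma> c) @ P)"
      obtain r where r: "P = p @ r" using F4p[of q] P_def by auto
      define X where "X = morph \<phi> (\<sigma> c @ q) @ p"
      have i': "i + length P \<le> length X" "take (length P) (drop i X) = P"
        using i unfolding X_def by (simp_all only: occ_iff PX)
      have "take (length p) (take (length P) (drop i X)) = take (length p) P"
        using i'(2) by simp
      then have "take (length p) (drop i X) = p" using r by (simp add: min_def)
      moreover have "i + length p \<le> length X" using i'(1) r by simp
      ultimately have "i \<in> occurrences p (morph \<phi> (\<sigma> c @ q) @ p)"
        unfolding X_def occ_iff by blast
      then obtain u v where uv: "\<sigma> c @ q = u @ v" "i = length (morph \<phi> u)" using Bp by blast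
      have "take (length P) (morph \<phi> v @ p) = P" using i'(2) uv unfolding X_def by simp
      then have "prefix P (morph \<phi> v @ p)" by (metis take_is_prefix)
      then have "prefix q v" using Lp P_def by blast
      then obtain s where s: "v = q @ s" by (auto simp: prefix_def)
      have "length u \<in> occurrences q (\<sigma> c @ q)"
        using uv(1) s by (simp add: occ_iff)
      then have "length u = 0 \<or> length u = length (\<sigma> c)" using F3q by auto
      then have "u = [] \<or> u = \<sigma> c" using uv(1)
        by (metis append_eq_append_conv length_0_conv)
      then show "i \<in> {0, length (morph \<phi> (\<sigma> c))}" using uv by auto
    qed
  next
    have "0 \<in> occurrences P (morph \<phi> (\<sigma> c) @ P)"
    proof -
      obtain r where "\<sigma> c @ q = q @ r" using q(3) by (auto simp: prefix_def)
      obtain s where "morph \<phi> r @ p = p @ s" using F4p by blast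
      have "morph \<phi> (\<sigma> c) @ P = P @ s" using PX[of c] \<open>\<sigma> c @ q = q @ r\<close> \<open>morph \<phi> r @ p = p @ s\<close>
        by (simp add: P_def)
      then show ?thesis by (simp add: occ_iff)
    qed
    then show "{0, length (morph \<phi> (\<sigma> c))} \<subseteq> occurrences P (morph \<phi> (\<sigma> c) @ P)"
      by (simp add: occ_iff)
  qed
  show ?thesis unfolding P_ret_def
  proof (intro exI[of _ P] conjI allI impI)
    show "palindrome P" using palp[OF q(1)] P_def by simp
    fix c
    show "palindrome (morph \<phi> (\<sigma> c) @ P)" using palp[of "\<sigma> c @ q"] q(2) PX[of c] by simp
    show "card (occurrences P (morph \<phi> (\<sigma> c) @ P)) = 2" using occ nonempty by simp
    have "0 \<in> occurrences P (morph \<phi> (\<sigma> c) @ P)" using occ by simp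
    then have "take (length P) (morph \<phi> (\<sigma> c) @ P) = P" by (simp add: occ_iff)
    then show "prefix P (morph \<phi> (\<sigma> c) @ P)" by (metis take_is_prefix)

    show "suffix P (morph \<phi> (\<sigma> c) @ P)" by (simp add: suffix_def)
  next
    fix c d :: 'c assume cd: "c \<noteq> d"
    show "morph \<phi> (\<sigma> c) \<noteq> morph \<phi> (\<sigma> d)"
    proof
      assume e: "morph \<phi> (\<sigma> c) = morph \<phi> (\<sigma> d)"
      have "prefix (\<sigma> c) (\<sigma> d)" using Lp e by simp
      moreover have "prefix (\<sigma> d) (\<sigma> c)" using Lp e by simp
      ultimately show False using q(4) cd by (metis prefix_order.antisym)
    qed
  qed
qed

end
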